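(* Let $d:\Sigma^n\to\Sigma$ be a depth assignment and let $s,t\in\Sigma^n$ be such that $(s,t)$ is a valid arc of the de Bruijn graph $B_n$. Then \[e_{s[0]} \equiv P(H(s)+e_{d_s}) - P(H(t)+e_{d_t}) \mod K.\]
   Context: Let $k\ge 1$ be an integer, $\Sigma=\{0,1,\dots,k-1\}$ with arithmetic on symbols taken modulo $k$, and $n\ge 1$. For $s\in\Sigma^n$ write $s=s[0]\cdots s[n-1]$. The de Bruijn graph $B_n$ has node set $\Sigma^n$ and an arc $(s,t)$ iff $s[1]\cdots s[n-1]=t[0]\cdots t[n-2]$. A depth assignment is any function $d:\Sigma^n\to\Sigma$, written $s\mapsto d_s$. An arc $(s,t)$ of $B_n$ is valid (with respect to $d$) if, with $b=s[0]$ and $c=t[n-1]$, either ($b+1=c$ and $d_s=d_t$) or ($b+1=d_t$ and $c=d_s$). The histogram $H(s):\Sigma\to\mathbb{Z}$ counts occurrences of each symbol in $s$; $e_b$ is the indicator function of $b\in\Sigma$; $K$ is the constant function $1$ on $\Sigma$; $P(H)(i)=\sum_{j=0}^i H(j)$ is the partial sum of $H:\Sigma\to\mathbb{Z}$; $F\equiv G\mod K$ means $F-G$ is an integer multiple of $K$. *)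

theory Defs
  imports Main
begin

text \<open>Alphabet Sigma = {0..<k} (symbols are naturals < k), words of length n are
  lists of length n over Sigma. Functions Sigma to Z are modelled as nat to int,
  only their values on {0..<k} matter.\<close>

definition words :: "nat \<Rightarrow> nat \<Rightarrow> nat list set" where
  "words k n = {s. length s = n \<and> set s \<subseteq> {0..<k}}"

definition is_depth_assignment :: "nat \<Rightarrow> nat \<Rightarrow> (nat list \<Rightarrow> nat) \<Rightarrow> bool" where
  "is_depth_assignment k n d \<longleftrightarrow> (\<forall>s\<in>words k n. d s < k)"

definition db_arc :: "nat \<Rightarrow> nat \<Rightarrow> nat list \<Rightarrow> nat list \<Rightarrow> bool" where
  "db_arc k n s t \<longleftrightarrow> s \<in> words k n \<and> t \<in> words k n \<and> tl s = butlast t"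

definition valid_arc :: "nat \<Rightarrow> nat \<Rightarrow> (nat list \<Rightarrow> nat) \<Rightarrow> nat list \<Rightarrow> nat list \<Rightarrow> bool" where
  "valid_arc k n d s t \<longleftrightarrow> db_arc k n s t \<and>
     (let b = s ! 0; c = t ! (n - 1) in
       ((b + 1) mod k = c \<and> d s = d t) \<or> ((b + 1) mod k = d t \<and> c = d s))"

definition hist :: "nat list \<Rightarrow> nat \<Rightarrow> int" where
  "hist s j = int (count_list s j)"

definition indic :: "nat \<Rightarrow> nat \<Rightarrow> int" where
  "indic b j = (if j = b then 1 else 0)"

definition psum :: "(nat \<Rightarrow> int) \<Rightarrow> nat \<Rightarrow> int" where
  "psum H i = (\<Sum>j\<le>i. H j)"

text \<open>F = G mod K on Sigma: F - G is an integer multiple of the constant function 1.\<close>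
definition cong_K :: "nat \<Rightarrow> (nat \<Rightarrow> int) \<Rightarrow> (nat \<Rightarrow> int) \<Rightarrow> bool" where
  "cong_K k F G \<longleftrightarrow> (\<exists>c::int. \<forall>i<k. F i - G i = c)"

end

theory Submission
  imports Defs
begin

lemma psum_indic: "(\<Sum>j\<le>i. indic b j) = (if b \<le> i then 1 else 0)"
  unfolding indic_def by (simp add: sum.delta)

lemma diff_psum:
  assumes "\<And>j. F j - G j = indic a j - indic b j + indic x j - indic y j"
  shows "psum F i - psum G i = (if a \<le> i then 1 else 0) - (if b \<le> i then 1 else 0)
     + (if x \<le> i then 1 else 0) - (if y \<le> i then 1 else 0)"
proof -
  have "psum F i - psum G i = (\<Sum>j\<le>i. F j - G j)"
    unfolding psum_def by (simp add: sum_subtractf)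
  also have "\<dots> = (\<Sum>j\<le>i. indic a j) - (\<Sum>j\<le>i. indic b j) + (\<Sum>j\<le>i. indic x j) - (\<Sum>j\<le>i. indic y j)"
    using assms by (simp add: sum_subtractf sum.distrib)
  finally show ?thesis by (simp add: psum_indic)
qed

theorem lemma3:
  fixes k n :: nat and d :: "nat list \<Rightarrow> nat" and s t :: "nat list"
  assumes "k \<ge> 1" and "n \<ge> 1"
    and "is_depth_assignment k n d"
    and "valid_arc k n d s t"
  shows "cong_K k (indic (s ! 0))
           (\<lambda>i. psum (\<lambda>j. hist s j + indic (d s) j) i - psum (\<lambda>j. hist t j + indic (d t) j) i)"
proof -
  define b where "b = s ! 0"
  define c where "c = t ! (n - 1)"
  have sw: "s \<in> words k n" and tw: "t \<in> words k n" and tl: "tl s = butlast t"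
    using assms(4) unfolding valid_arc_def db_arc_def by auto
  have ls: "length s = n" and lt: "length t = n" using sw tw by (auto simp: words_def)
  have sne: "s \<noteq> []" and tne: "t \<noteq> []" using ls lt assms(2) by auto
  have s_eq: "s = b # tl s" using sne unfolding b_def by (cases s) auto
  have t_eq: "t = butlast t @ [c]" using tne lt unfolding c_def
    by (metis append_butlast_last_id diff_Suc_1 last_conv_nth length_butlast)
  have "b \<in> set s" using s_eq by (metis list.set_intros(1))
  hence bk: "b < k" using sw by (auto simp: words_def)
  have "c \<in> set t" using t_eq by (metis in_set_conv_decomp)
  hence ck: "c < k" using tw by (auto simp: words_def)
  have hc: "\<And>j. hist s j - hist t j = indic b j - indic c j"
  proof -
    fix j
    have "count_list s j = count_list (tl s) j + (if b = j then 1 else 0)"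
      by (subst s_eq) simp
    moreover have "count_list t j = count_list (tl s) j + (if c = j then 1 else 0)"
      using tl by (subst t_eq) simp
    ultimately show "hist s j - hist t j = indic b j - indic c j"
      unfolding hist_def indic_def by auto
  qed
  have va: "((b + 1) mod k = c \<and> d s = d t) \<or> ((b + 1) mod k = d t \<and> c = d s)"
    using assms(4) unfolding valid_arc_def b_def c_def Let_def by auto
  show ?thesis
    unfolding cong_K_def
  proof (rule exI[of _ "if b + 1 < k then 0 else 1"], intro allI impI)
    fix i assume ik: "i < k"
    have D: "psum (\<lambda>j. hist s j + indic (d s) j) i - psum (\<lambda>j. hist t j + indic (d t) j) i
      = (if b \<le> i then 1 else 0) - (if c \<le> i then 1 else 0)
     + (if d s \<le> i then 1 else 0) - (if d t \<le> i then 1 else 0)"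
      by (rule diff_psum) (use hc in \<open>simp add: algebra_simps\<close>)
    have E: "indic b i - ((if b \<le> i then 1 else 0) - (if c \<le> i then 1 else 0)
     + (if d s \<le> i then 1 else 0) - (if d t \<le> i then 1 else 0)) = (if b + 1 < k then 0 else (1::int))"
      proof (cases "b + 1 < k")
        case True
        then have "(b+1) mod k = b + 1" by simp
        then show ?thesis using va True ik by (auto simp: indic_def)
      next
        case False
        then have "b + 1 = k" using bk by simp
        then have "(b+1) mod k = 0" by simp
        then show ?thesis using va False ik bk by (auto simp: indic_def)
      qed
    show "indic (s ! 0) i - (psum (\<lambda>j. hist s j + indic (d s) j) i - psum (\<lambda>j. hist t j + indic (d t) j) i)
       = (if b + 1 < k then 0 else 1)"
      using D E b_def by simp
  qed
qed

end
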